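(* Let $A$ be a finite set with $|A|=n$ and let $f:A\to A$ be a bijection. Then there exists a binary operation $*$ on $A$ such that $(A,* )$ is a cyclic group and $f$ is an automorphism of $(A,* )$ if and only if either $f$ is the identity map, or there is an index $i$ with $2\le i\le \phi(n)$ such that, writing $\ell_i=\mathrm{ord}_n(k_i)$ and letting $\ell_i>\lambda_1>\cdots>\lambda_t>1$ be the complete list of positive divisors of $\ell_i$ that are greater than $1$, the bijection $f$ has exactly $[U_n:\langle k_i\rangle]+L_{i,\ell_i}$ cycles of length $\ell_i$, exactly $L_{i,\lambda_j}$ cycles of length $\lambda_j$ for each $j=1,\dots,t$, exactly $L_{i,1}+1$ cycles of length $1$ (fixed points), and no other cycles.
   Context: For a bijection $f$ of a finite set, a cycle is a sequence $a_1,\dots,a_m$ of distinct elements with $f(a_j)=a_{j+1}$ for $j<m$ and $f(a_m)=a_1$; its length is $m$; every element lies in exactly one cycle. $\phi$ is Euler's totient function. In the ring $\mathbb{Z}_n=\{0,1,\dots,n-1\}$, let $U_n=\{k\in\mathbb{Z}_n:\gcd(k,n)=1\}$ be the unit group, enumerated as $U_n=\{k_1,k_2,\dots,k_{\phi(n)}\}$ with $k_1=1$. Let $T_n=\mathbb{Z}_n\setminus(U_n\cup\{0\})$, and for $z\in T_n$ put $z'=n/\gcd(z,n)$. For integers $m\ge1$ and $k$ coprime to $m$, $\mathrm{ord}_m(k)$ denotes the least $x\in\mathbb{N}$ with $k^x\equiv1\pmod m$. $\langle k_i\rangle$ is the cyclic subgroup of $U_n$ generated by $k_i$ and $[U_n:\langle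 k_i\rangle]$ its index. For a positive divisor $\lambda$ of $\ell_i$, define $L_{i,\lambda}=\frac{1}{\lambda}\left|\{z\in T_n:\mathrm{ord}_{z'}(k_i)=\lambda\}\right|$. *)

theory Defs
  imports "HOL-Number_Theory.Number_Theory" "HOL-Algebra.Elementary_Groups"
begin

(* The cycle of f through a: the set of iterates f^j(a). For a bijection of a
   finite set this is exactly the set of elements of the cycle containing a. *)
definition cycle_of :: "('a \<Rightarrow> 'a) \<Rightarrow> 'a \<Rightarrow> 'a set" where
  "cycle_of f a = {(f ^^ j) a | j. True}"

definition num_cycles :: "'a set \<Rightarrow> ('a \<Rightarrow> 'a) \<Rightarrow> nat \<Rightarrow> nat" where
  "num_cycles A f m = card {cycle_of f a | a. a \<in> A \<and> card (cycle_of f a) = m}"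

definition units_Zn :: "nat \<Rightarrow> nat set" where
  "units_Zn n = {k. k < n \<and> coprime k n}"

definition Tn :: "nat \<Rightarrow> nat set" where
  "Tn n = {z. z < n \<and> z \<notin> units_Zn n \<and> z \<noteq> 0}"

definition cyc_sub :: "nat \<Rightarrow> nat \<Rightarrow> nat set" where
  "cyc_sub n k = {k ^ j mod n | j. True}"

definition unit_index :: "nat \<Rightarrow> nat \<Rightarrow> nat" where
  "unit_index n k = card {(\<lambda>h. (h * x) mod n) ` cyc_sub n k | x. x \<in> units_Zn n}"

definition Lcount :: "nat \<Rightarrow> nat \<Rightarrow> nat \<Rightarrow> real" where
  "Lcount n k lam = real (card {z \<in> Tn n. ord (n div gcd z n) k = lam}) / real lam"

end

theory Submission
  imports Defs "HOL-Algebra.Multiplicative_Group"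
begin


lemma funpow_in:
  assumes "bij_betw f A A" "a \<in> A" shows "(f ^^ j) a \<in> A"
  using assms by (induction j) (auto simp: bij_betw_def)

lemma cycle_of_iff: "x \<in> cycle_of f a \<longleftrightarrow> (\<exists>j. x = (f ^^ j) a)"
  by (simp add: cycle_of_def)

lemma cycle_of_subset:
  assumes "bij_betw f A A" "a \<in> A" shows "cycle_of f a \<subseteq> A"
  using funpow_in[OF assms] by (auto simp: cycle_of_def)

lemma period_ex:
  assumes "finite A" "bij_betw f A A" "a \<in> A"
  shows "\<exists>p>0. (f ^^ p) a = a"
proof -
  have "(\<lambda>j. (f ^^ j) a) ` {..card A} \<subseteq> A" using funpow_in[OF assms(2,3)] by auto
  moreover have "card {..card A} > card A" by simp
  ultimately have "\<not> inj_on (\<lambda>j. (f ^^ j) a) {..card A}"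
    using card_inj_on_le[OF _ _ assms(1)] by fastforce
  then obtain i j where ij: "i \<le> card A" "j \<le> card A" "i \<noteq> j" "(f ^^ i) a = (f ^^ j) a"
    by (auto simp: inj_on_def)
  then obtain i j where ij: "i < j" "(f ^^ i) a = (f ^^ j) a"
    by (metis nat_neq_iff)
  have "(f ^^ i) ((f ^^ (j - i)) a) = (f ^^ (i + (j - i))) a"
    by (simp add: funpow_add)
  hence "(f ^^ i) ((f ^^ (j - i)) a) = (f ^^ i) a"
    using ij by simp
  moreover have "inj_on (f ^^ i) A" using bij_betw_funpow[OF assms(2)] by (auto simp: bij_betw_def)
  ultimately have "(f ^^ (j - i)) a = a"
    using funpow_in[OF assms(2,3)] assms(3) by (meson inj_onD)
  thus ?thesis using ij by (intro exI[of _ "j - i"]) auto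
qed

definition per :: "('a \<Rightarrow> 'a) \<Rightarrow> 'a \<Rightarrow> nat" where
  "per f a = (LEAST p. 0 < p \<and> (f ^^ p) a = a)"

context
  fixes A f a
  assumes fin: "finite A" and bij: "bij_betw f A A" and aA: "a \<in> A"
begin

lemma per_pos: "per f a > 0" and per_eq: "(f ^^ per f a) a = a"
  using LeastI_ex[OF period_ex[OF fin bij aA]] by (auto simp: per_def)

lemma per_least: "0 < q \<Longrightarrow> q < per f a \<Longrightarrow> (f ^^ q) a \<noteq> a"
  unfolding per_def using not_less_Least by blast

lemma funpow_mod_per: "(f ^^ j) a = (f ^^ (j mod per f a)) a"
  using funpow_mod_eq[OF per_eq] by metis

lemma funpow_inj_per:
  assumes "i < per f a" "j < per f a" "(f ^^ i) a = (f ^^ j) a" shows "i = j"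
proof (rule ccontr)
  assume "i \<noteq> j"
  then obtain u v where uv: "u < v" "v < per f a" "(f ^^ u) a = (f ^^ v) a"
    using assms by (metis nat_neq_iff)
  have "(f ^^ u) ((f ^^ (v - u)) a) = (f ^^ u) a"
    using uv by (metis add_diff_inverse_nat funpow_add less_imp_le_nat not_le comp_apply add.commute)
  moreover have "inj_on (f ^^ u) A" using bij_betw_funpow[OF bij] by (auto simp: bij_betw_def)
  ultimately have "(f ^^ (v - u)) a = a"
    using funpow_in[OF bij aA] aA by (meson inj_onD)
  thus False using per_least[of "v - u"] uv by auto
qed

lemma funpow_eq_iff: "(f ^^ i) a = (f ^^ j) a \<longleftrightarrow> i mod per f a = j mod per f a"
proof
  assume "(f ^^ i) a = (f ^^ j) a"
  then have "(f ^^ (i mod per f a)) a = (f ^^ (j mod per f a)) a" using funpow_mod_per by metis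
  then show "i mod per f a = j mod per f a" using funpow_inj_per per_pos by auto
next
  assume "i mod per f a = j mod per f a" then show "(f ^^ i) a = (f ^^ j) a"
    using funpow_mod_per by metis
qed

lemma cycle_of_per: "cycle_of f a = (\<lambda>j. (f ^^ j) a) ` {..<per f a}"
proof -
  have "(f ^^ j) a \<in> (\<lambda>j. (f ^^ j) a) ` {..<per f a}" for j
    using funpow_mod_per[of j] per_pos by (intro image_eqI[of _ _ "j mod per f a"]) auto
  thus ?thesis unfolding cycle_of_def by blast
qed

lemma card_cycle_of: "card (cycle_of f a) = per f a"
proof -
  have "inj_on (\<lambda>j. (f ^^ j) a) {..<per f a}"
    using funpow_inj_per by (auto simp: inj_on_def)
  thus ?thesis by (simp add: cycle_of_per card_image)
qed

lemma finite_cycle_of: "finite (cycle_of f a)"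
  by (simp add: cycle_of_per)

lemma self_in_cycle: "a \<in> cycle_of f a"
  unfolding cycle_of_def by (auto intro: exI[of _ 0])

lemma cycle_of_eq:
  assumes "b \<in> cycle_of f a" shows "cycle_of f b = cycle_of f a"
proof -
  obtain i where b: "b = (f ^^ i) a" using assms by (auto simp: cycle_of_def)
  have "cycle_of f b \<subseteq> cycle_of f a"
    by (auto simp: cycle_of_def b funpow_add[symmetric, THEN fun_cong, simplified] 
         simp flip: comp_apply[of "f ^^ _" "f ^^ _"] funpow_add)
  moreover have "a \<in> cycle_of f b"
  proof -
    have "(f ^^ (per f a - i mod per f a)) b = (f ^^ ((per f a - i mod per f a) + i)) a"
      by (simp add: b funpow_add)
    also have "\<dots> = a"
    proof -
      have "((per f a - i mod per f a) + i) mod per f a = ((per f a - i mod per f a) + i mod per f a) mod per f a"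
        by (simp add: mod_add_right_eq)
      also have "\<dots> = 0 mod per f a" using per_pos mod_less_divisor[of "per f a" i]
        by simp
      finally have "((per f a - i mod per f a) + i) mod per f a = 0 mod per f a" .
      thus ?thesis using funpow_eq_iff[of "per f a - i mod per f a + i" 0] by simp
    qed
    finally show ?thesis unfolding cycle_of_def by (metis (mono_tags, lifting) mem_Collect_eq)
  qed
  moreover have "cycle_of f a \<subseteq> cycle_of f b" if H: "a \<in> cycle_of f b"
  proof -
    obtain i' where a: "a = (f ^^ i') b" using H by (auto simp: cycle_of_iff)
    show ?thesis by (auto simp: cycle_of_def a simp flip: comp_apply[of "f ^^ _" "f ^^ _"] funpow_add)
  qed
  ultimately show ?thesis by blast
qed

end


lemma cycle_of_disj:
  assumes "finite A" "bij_betw f A A" "a \<in> A" "b \<in> A" "cycle_of f a \<noteq> cycle_of f b"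
  shows "cycle_of f a \<inter> cycle_of f b = {}"
proof (rule ccontr)
  assume "cycle_of f a \<inter> cycle_of f b \<noteq> {}"
  then obtain x where x: "x \<in> cycle_of f a" "x \<in> cycle_of f b" by blast
  have "cycle_of f x = cycle_of f a" using cycle_of_eq[OF assms(1,2,3) x(1)] .
  moreover have "cycle_of f x = cycle_of f b" using cycle_of_eq[OF assms(1,2,4) x(2)] .
  ultimately show False using assms(5) by simp
qed

lemma f_in_cycle: "x \<in> cycle_of f a \<Longrightarrow> f x \<in> cycle_of f a"
  by (auto simp: cycle_of_iff intro: exI[of _ "Suc _"])

lemma bij_betw_remove_cycle:
  assumes fin: "finite A" and bij: "bij_betw f A A" and aA: "a \<in> A"
  shows "bij_betw f (A - cycle_of f a) (A - cycle_of f a)"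
proof -
  let ?C = "cycle_of f a"
  have CA: "?C \<subseteq> A" using cycle_of_subset[OF bij aA] .
  have inj: "inj_on f A" using bij by (auto simp: bij_betw_def)
  have "f ` ?C \<subseteq> ?C" by (simp add: image_subset_iff f_in_cycle)
  moreover have "card (f ` ?C) = card ?C"
    by (rule card_image[OF inj_on_subset[OF inj CA]])
  ultimately have fC: "f ` ?C = ?C"
    using card_subset_eq finite_cycle_of[OF fin bij aA] by blast
  have "f ` (A - ?C) = f ` A - f ` ?C"
    using inj_on_image_set_diff[OF inj _ CA] by simp
  also have "\<dots> = A - ?C" using bij fC by (simp add: bij_betw_def)
  finally show ?thesis using inj_on_subset[OF inj] by (auto simp: bij_betw_def)
qed

lemma count_cycles:
  assumes fin: "finite A" and bij: "bij_betw f A A" and SA: "S \<subseteq> A"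
    and closed: "\<And>a. a \<in> S \<Longrightarrow> cycle_of f a \<subseteq> S"
  shows "m * card {cycle_of f a | a. a \<in> S \<and> card (cycle_of f a) = m}
         = card {a \<in> S. card (cycle_of f a) = m}"
proof -
  let ?C = "{cycle_of f a | a. a \<in> S \<and> card (cycle_of f a) = m}"
  have U: "\<Union>?C = {a \<in> S. card (cycle_of f a) = m}"
  proof
    show "\<Union>?C \<subseteq> {a \<in> S. card (cycle_of f a) = m}"
    proof
      fix x assume "x \<in> \<Union>?C"
      then obtain c where c: "c \<in> ?C" "x \<in> c" by (rule UnionE)
      then obtain a where a: "a \<in> S" "card (cycle_of f a) = m" "c = cycle_of f a" by blast
      have aA: "a \<in> A" using a(1) SA by blast
      have "cycle_of f x = cycle_of f a" using cycle_of_eq[OF fin bij aA] c(2) a(3) by simp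
      moreover have "x \<in> S" using closed[OF a(1)] c(2) a(3) by blast
      ultimately show "x \<in> {a \<in> S. card (cycle_of f a) = m}" using a(2) by simp
    qed
  next
    show "{a \<in> S. card (cycle_of f a) = m} \<subseteq> \<Union>?C"
      using self_in_cycle[OF fin bij] SA by blast
  qed
  have finS: "finite S" using fin SA finite_subset by blast
  have F1: "finite ?C" using finS by simp
  have F2: "finite (\<Union>?C)" unfolding U using finS by simp
  have F3: "\<forall>c\<in>?C. card c = m" by blast
  have F4: "\<forall>c1\<in>?C. \<forall>c2\<in>?C. c1 \<noteq> c2 \<longrightarrow> c1 \<inter> c2 = {}"
  proof (intro ballI impI)
    fix c1 c2 assume "c1 \<in> ?C" "c2 \<in> ?C" "c1 \<noteq> c2"
    then obtain a1 a2 where "a1 \<in> S" "a2 \<in> S" "c1 = cycle_of f a1" "c2 = cycle_of f a2" by blast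
    thus "c1 \<inter> c2 = {}" using cycle_of_disj[OF fin bij, of a1 a2] SA \<open>c1 \<noteq> c2\<close> by blast
  qed
  have "m * card ?C = card (\<Union>?C)"
    by (rule card_partition[OF F1 F2 F3[rule_format] F4[rule_format]])
  thus ?thesis unfolding U .
qed

lemma num_cycles_0:
  assumes fin: "finite A" and bij: "bij_betw f A A"
  shows "num_cycles A f 0 = 0"
proof -
  have "card (cycle_of f a) \<noteq> 0" if "a \<in> A" for a
    using card_cycle_of[OF fin bij that] per_pos[OF fin bij that] by simp
  hence "{cycle_of f a | a. a \<in> A \<and> card (cycle_of f a) = 0} = {}"
  proof (intro equals0I)
    fix c assume "c \<in> {cycle_of f a | a. a \<in> A \<and> card (cycle_of f a) = 0}"
    then obtain a where "a \<in> A" "card (cycle_of f a) = 0" by blast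
    thus False using card_cycle_of[OF fin bij] per_pos[OF fin bij] by fastforce
  qed
  thus ?thesis unfolding num_cycles_def by (simp only: card.empty)
qed

lemma funpow_conj:
  assumes "bij_betw g B B" "\<forall>x\<in>B. f (\<phi> x) = \<phi> (g x)" "x \<in> B"
  shows "(f ^^ j) (\<phi> x) = \<phi> ((g ^^ j) x)"
proof (induction j)
  case 0 show ?case by simp
next
  case (Suc j)
  have "(g ^^ j) x \<in> B" using funpow_in[OF assms(1,3)] .
  thus ?case using Suc assms(2) by simp
qed

lemma num_cycles_conj:
  assumes finB: "finite B" and bijg: "bij_betw g B B" and phi: "bij_betw \<phi> B A"
    and conj: "\<forall>x\<in>B. f (\<phi> x) = \<phi> (g x)"
  shows "num_cycles A f m = num_cycles B g m"
proof -
  have cyc: "cycle_of f (\<phi> x) = \<phi> ` cycle_of g x" if "x \<in> B" for x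
  proof
    show "cycle_of f (\<phi> x) \<subseteq> \<phi> ` cycle_of g x"
    proof
      fix y assume "y \<in> cycle_of f (\<phi> x)"
      then obtain j where "y = (f ^^ j) (\<phi> x)" by (auto simp: cycle_of_iff)
      hence "y = \<phi> ((g ^^ j) x)" using funpow_conj[OF bijg conj that] by simp
      moreover have "(g ^^ j) x \<in> cycle_of g x" by (auto simp: cycle_of_iff)
      ultimately show "y \<in> \<phi> ` cycle_of g x" by blast
    qed
    show "\<phi> ` cycle_of g x \<subseteq> cycle_of f (\<phi> x)"
    proof
      fix y assume "y \<in> \<phi> ` cycle_of g x"
      then obtain j where "y = \<phi> ((g ^^ j) x)" by (auto simp: cycle_of_iff)
      hence "y = (f ^^ j) (\<phi> x)" using funpow_conj[OF bijg conj that] by simp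
      thus "y \<in> cycle_of f (\<phi> x)" by (auto simp: cycle_of_iff)
    qed
  qed
  have injphi: "inj_on \<phi> B" using phi by (auto simp: bij_betw_def)
  have cardc: "card (cycle_of f (\<phi> x)) = card (cycle_of g x)" if "x \<in> B" for x
    using cyc[OF that] card_image inj_on_subset[OF injphi cycle_of_subset[OF bijg that]] by metis
  have A: "A = \<phi> ` B" using phi by (auto simp: bij_betw_def)
  have eq: "{cycle_of f a | a. a \<in> A \<and> card (cycle_of f a) = m}
      = image \<phi> ` {cycle_of g x | x. x \<in> B \<and> card (cycle_of g x) = m}"
    unfolding A
  proof (intro equalityI subsetI)
    fix c assume "c \<in> {cycle_of f a | a. a \<in> \<phi> ` B \<and> card (cycle_of f a) = m}"
    then obtain x where x: "x \<in> B" "c = cycle_of f (\<phi> x)" "card (cycle_of f (\<phi> x)) = m" by blast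
    thus "c \<in> image \<phi> ` {cycle_of g x | x. x \<in> B \<and> card (cycle_of g x) = m}"
      using cyc cardc by auto
  next
    fix c assume "c \<in> image \<phi> ` {cycle_of g x | x. x \<in> B \<and> card (cycle_of g x) = m}"
    then obtain x where x: "x \<in> B" "c = \<phi> ` cycle_of g x" "card (cycle_of g x) = m" by blast
    thus "c \<in> {cycle_of f a | a. a \<in> \<phi> ` B \<and> card (cycle_of f a) = m}"
    proof -
      have "c = cycle_of f (\<phi> x)" "card (cycle_of f (\<phi> x)) = m" "\<phi> x \<in> \<phi> ` B"
        using cyc[OF x(1)] cardc[OF x(1)] x by auto
      thus ?thesis by blast
    qed
  qed
  have "inj_on (image \<phi>) {cycle_of g x | x. x \<in> B \<and> card (cycle_of g x) = m}"
    by (rule inj_on_subset[OF inj_on_image_Pow[OF injphi]])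
       (use cycle_of_subset[OF bijg] in auto)
  thus ?thesis unfolding num_cycles_def eq by (simp add: card_image)
qed


lemma num_cycles_remove:
  assumes fin: "finite A" and bij: "bij_betw f A A" and aA: "a \<in> A"
  shows "num_cycles (A - cycle_of f a) f m =
     (if m = card (cycle_of f a) then num_cycles A f m - 1 else num_cycles A f m)"
proof -
  let ?C = "cycle_of f a"
  let ?S = "{cycle_of f x | x. x \<in> A \<and> card (cycle_of f x) = m}"
  have eq: "{cycle_of f x | x. x \<in> A - ?C \<and> card (cycle_of f x) = m} = ?S - {?C}"
  proof (intro equalityI subsetI)
    fix c assume "c \<in> {cycle_of f x | x. x \<in> A - ?C \<and> card (cycle_of f x) = m}"
    then obtain x where x: "x \<in> A" "x \<notin> ?C" "c = cycle_of f x" "card (cycle_of f x) = m" by blast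
    have "c \<noteq> ?C" using x self_in_cycle[OF fin bij x(1)] by auto
    thus "c \<in> ?S - {?C}" using x by blast
  next
    fix c assume "c \<in> ?S - {?C}"
    then obtain x where x: "x \<in> A" "c = cycle_of f x" "card (cycle_of f x) = m" "c \<noteq> ?C" by blast
    have "x \<notin> ?C" using cycle_of_eq[OF fin bij aA] x by blast
    thus "c \<in> {cycle_of f x | x. x \<in> A - ?C \<and> card (cycle_of f x) = m}" using x by blast
  qed
  have "?C \<in> ?S \<longleftrightarrow> m = card ?C"
  proof
    assume "?C \<in> ?S"
    then obtain x where "?C = cycle_of f x" "card (cycle_of f x) = m" by blast
    thus "m = card ?C" by simp
  next
    assume "m = card ?C" thus "?C \<in> ?S" using aA by blast
  qed
  thus ?thesis unfolding num_cycles_def eq by (simp add: card_Diff_singleton_if)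
qed

lemma num_cycles_pos:
  assumes fin: "finite A" and bij: "bij_betw f A A" and aA: "a \<in> A"
  shows "num_cycles A f (card (cycle_of f a)) > 0"
proof -
  have "finite {cycle_of f x | x. x \<in> A \<and> card (cycle_of f x) = card (cycle_of f a)}"
    using fin by simp
  moreover have "cycle_of f a \<in> {cycle_of f x | x. x \<in> A \<and> card (cycle_of f x) = card (cycle_of f a)}"
    using aA by blast
  ultimately show ?thesis unfolding num_cycles_def by (subst card_gt_0_iff) blast
qed

lemma num_cycles_pos_ex:
  assumes "num_cycles A f m > 0"
  shows "\<exists>a\<in>A. card (cycle_of f a) = m"
proof -
  have "{cycle_of f x | x. x \<in> A \<and> card (cycle_of f x) = m} \<noteq> {}"
    using assms unfolding num_cycles_def by (intro notI) simp
  thus ?thesis by blast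
qed

lemma conj_exists:
  assumes "finite A" "finite B" "bij_betw f A A" "bij_betw g B B"
    "\<forall>m. num_cycles A f m = num_cycles B g m"
  shows "\<exists>\<phi>. bij_betw \<phi> B A \<and> (\<forall>x\<in>B. f (\<phi> x) = \<phi> (g x))"
  using assms
proof (induction A arbitrary: B rule: finite_psubset_induct)
  case (psubset A)
  show ?case
  proof (cases "A = {}")
    case True
    have "B = {}"
    proof (rule ccontr)
      assume "B \<noteq> {}"
      then obtain b where b: "b \<in> B" by blast
      have "num_cycles B g (card (cycle_of g b)) > 0"
        using num_cycles_pos[OF psubset(3,5) b] .
      moreover have "num_cycles A f (card (cycle_of g b)) = 0"
        using True by (simp add: num_cycles_def)
      ultimately show False using psubset(6) by simp
    qed
    thus ?thesis using True by (auto simp: bij_betw_def)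
  next
    case False
    then obtain a where aA: "a \<in> A" by blast
    note finA = psubset(1) and finB = psubset(3) and bijf = psubset(4) and bijg = psubset(5)
    define C where "C = cycle_of f a"
    define m where "m = card C"
    have "num_cycles B g m > 0"
      using num_cycles_pos[OF finA bijf aA] psubset(6) by (simp add: m_def C_def)
    then obtain b where bB: "b \<in> B" and bm: "card (cycle_of g b) = m"
      using num_cycles_pos_ex by blast
    define D where "D = cycle_of g b"
    have CA: "C \<subseteq> A" unfolding C_def using cycle_of_subset[OF bijf aA] .
    have DB: "D \<subseteq> B" unfolding D_def using cycle_of_subset[OF bijg bB] .
    have perf: "per f a = m" using card_cycle_of[OF finA bijf aA] by (simp add: m_def C_def)
    have perg: "per g b = m" using card_cycle_of[OF finB bijg bB] bm by simp
    have bijf': "bij_betw f (A - C) (A - C)" unfolding C_def by (rule bij_betw_remove_cycle[OF finA bijf aA])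
    have bijg': "bij_betw g (B - D) (B - D)" unfolding D_def by (rule bij_betw_remove_cycle[OF finB bijg bB])
    have cnt: "\<forall>k. num_cycles (A - C) f k = num_cycles (B - D) g k"
      using num_cycles_remove[OF finA bijf aA] num_cycles_remove[OF finB bijg bB] psubset(6) bm
      by (simp add: C_def D_def m_def)
    have "A - C \<subset> A" using aA self_in_cycle[OF finA bijf aA] C_def by blast
    then obtain \<phi>' where phi': "bij_betw \<phi>' (B - D) (A - C)" and conj': "\<forall>x\<in>B - D. f (\<phi>' x) = \<phi>' (g x)"
      using psubset(2)[of "A - C" "B - D"] finA finB bijf' bijg' cnt by blast
    define \<psi> where "\<psi> x = (f ^^ (SOME j. x = (g ^^ j) b)) a" for x
    have psi: "\<psi> ((g ^^ j) b) = (f ^^ j) a" for j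
    proof -
      have "\<exists>j'. (g ^^ j) b = (g ^^ j') b" by blast
      then have "(g ^^ j) b = (g ^^ (SOME j'. (g ^^ j) b = (g ^^ j') b)) b" by (rule someI_ex)
      then have "j mod m = (SOME j'. (g ^^ j) b = (g ^^ j') b) mod m"
        using funpow_eq_iff[OF finB bijg bB] perg by metis
      then show ?thesis unfolding \<psi>_def using funpow_eq_iff[OF finA bijf aA] perf by metis
    qed
    have bpsi: "bij_betw \<psi> D C"
    proof -
      have "inj_on \<psi> D"
      proof (rule inj_onI)
        fix x y assume xy: "x \<in> D" "y \<in> D" "\<psi> x = \<psi> y"
        obtain i where i: "x = (g ^^ i) b" using xy(1) unfolding D_def cycle_of_iff by blast
        obtain j where j: "y = (g ^^ j) b" using xy(2) unfolding D_def cycle_of_iff by blast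
        have "(f ^^ i) a = (f ^^ j) a" using xy(3) i j psi by simp
        hence "i mod m = j mod m" using funpow_eq_iff[OF finA bijf aA] perf by simp
        thus "x = y" using funpow_eq_iff[OF finB bijg bB] perg i j by simp
      qed
      moreover have "\<psi> ` D = C"
      proof
        show "\<psi> ` D \<subseteq> C"
        proof
          fix y assume "y \<in> \<psi> ` D"
          then obtain z where z: "z \<in> D" "y = \<psi> z" by blast
          then obtain j where "z = (g ^^ j) b" unfolding D_def cycle_of_iff by blast
          hence "y = \<psi> ((g ^^ j) b)" using z by simp
          thus "y \<in> C" unfolding C_def cycle_of_iff using psi by blast
        qed
        show "C \<subseteq> \<psi> ` D"
        proof
          fix y assume "y \<in> C"
          then obtain j where "y = (f ^^ j) a" unfolding C_def cycle_of_iff by blast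
          hence "y = \<psi> ((g ^^ j) b)" using psi by simp
          moreover have "(g ^^ j) b \<in> D" unfolding D_def cycle_of_iff by blast
          ultimately show "y \<in> \<psi> ` D" by blast
        qed
      qed
      ultimately show ?thesis by (simp add: bij_betw_def)
    qed
    define \<phi> where "\<phi> x = (if x \<in> D then \<psi> x else \<phi>' x)" for x
    have "bij_betw \<phi> D C" using bpsi by (rule bij_betw_cong[THEN iffD1, rotated]) (simp add: \<phi>_def)
    moreover have "bij_betw \<phi> (B - D) (A - C)" using phi' by (rule bij_betw_cong[THEN iffD1, rotated]) (simp add: \<phi>_def)
    ultimately have "bij_betw \<phi> (D \<union> (B - D)) (C \<union> (A - C))"
      by (rule bij_betw_combine) blast
    moreover have "D \<union> (B - D) = B" "C \<union> (A - C) = A" using CA DB by blast+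
    ultimately have bphi: "bij_betw \<phi> B A" by simp
    have "f (\<phi> x) = \<phi> (g x)" if x: "x \<in> B" for x
    proof (cases "x \<in> D")
      case True
      then obtain j where j: "x = (g ^^ j) b" unfolding D_def cycle_of_iff by blast
      have gx: "g x = (g ^^ Suc j) b" using j by simp
      have "g x \<in> D" using True f_in_cycle D_def by metis
      have "\<phi> (g x) = (f ^^ Suc j) a" using \<open>g x \<in> D\<close> gx psi by (simp only: \<phi>_def if_True)
      moreover have "\<phi> x = (f ^^ j) a" using True j psi by (simp only: \<phi>_def if_True)
      ultimately show ?thesis by simp
    next
      case False
      hence "x \<in> B - D" using x by blast
      moreover have "g x \<in> B - D" using bijg' calculation by (auto simp: bij_betw_def)
      ultimately show ?thesis using conj' False by (auto simp: \<phi>_def)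
    qed
    thus ?thesis using bphi by blast
  qed
qed



lemma key_cong:
  fixes n x k p :: nat
  assumes n: "n > 0" and x: "x < n"
  shows "(x * k ^ p mod n = x) \<longleftrightarrow> [k ^ p = 1] (mod (n div gcd x n))"
proof -
  define d where "d = gcd x n"
  define n' where "n' = n div d"
  define x' where "x' = x div d"
  have d0: "d > 0" using n by (simp add: d_def)
  have nd: "n = d * n'" unfolding n'_def d_def by simp
  have xd: "x = d * x'" unfolding x'_def d_def by simp
  have cop: "coprime x' n'" unfolding x'_def n'_def d_def using div_gcd_coprime n by blast
  have "(x * k ^ p mod n = x) \<longleftrightarrow> (x * k ^ p) mod n = x mod n" using x by simp
  also have "\<dots> \<longleftrightarrow> d * ((x' * k ^ p) mod n') = d * (x' mod n')"
    by (simp add: nd xd mod_mult_mult1 mult.assoc)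
  also have "\<dots> \<longleftrightarrow> [x' * k ^ p = x' * 1] (mod n')"
    using d0 by (simp add: cong_def)
  also have "\<dots> \<longleftrightarrow> [k ^ p = 1] (mod n')"
    using cong_mult_lcancel_nat[OF cop] by blast
  finally show ?thesis by (simp add: n'_def d_def)
qed

context
  fixes n k :: nat
  assumes n2: "n \<ge> 2" and kn: "k < n" and cop: "coprime k n"
begin

definition gk :: "nat \<Rightarrow> nat" where "gk j = j * k mod n"

lemma gk_apply: "gk j = j * k mod n" by (simp add: gk_def)

lemma n0: "n > 0" using n2 by simp

lemma gk_bij: "bij_betw gk {0..<n} {0..<n}"
proof -
  have sub: "gk ` {0..<n} \<subseteq> {0..<n}" using n0 by (auto simp: gk_def)
  have inj: "inj_on gk {0..<n}"
  proof (rule inj_onI)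
    fix i j assume ij: "i \<in> {0..<n}" "j \<in> {0..<n}" "gk i = gk j"
    hence "[i * k = j * k] (mod n)" by (simp add: gk_def cong_def)
    hence "[i = j] (mod n)" using cong_mult_rcancel_nat[OF cop] by blast
    thus "i = j" using ij cong_less_modulus_unique_nat by auto
  qed
  have "gk ` {0..<n} = {0..<n}" using endo_inj_surj[OF _ sub inj] by simp
  thus ?thesis using inj by (simp add: bij_betw_def)
qed

lemma gk_pow: "x < n \<Longrightarrow> (gk ^^ j) x = x * k ^ j mod n"
proof (induction j)
  case 0 thus ?case by simp
next
  case (Suc j)
  have "(gk ^^ Suc j) x = gk ((gk ^^ j) x)" by simp
  also have "\<dots> = gk (x * k ^ j mod n)" using Suc by simp
  also have "\<dots> = (x * k ^ j mod n) * k mod n" by (simp add: gk_def)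
  also have "\<dots> = (x * k ^ j) * k mod n" by (simp add: mod_mult_left_eq)
  also have "\<dots> = x * k ^ Suc j mod n" by (simp add: algebra_simps)
  finally show ?case .
qed

lemma per_gk: assumes x: "x < n" shows "per gk x = ord (n div gcd x n) k"
proof -
  have cd: "coprime (n div gcd x n) k"
  proof -
    have "n = (n div gcd x n) * gcd x n" by simp
    hence "(n div gcd x n) dvd n" by (metis dvd_triv_left)
    moreover have "coprime n k" using cop by (simp add: coprime_commute)
    ultimately show ?thesis using coprime_divisors[of "n div gcd x n" n k k] by simp
  qed
  have "per gk x = (LEAST p. 0 < p \<and> (gk ^^ p) x = x)" by (simp add: per_def)
  also have "\<dots> = (LEAST p. 0 < p \<and> [k ^ p = 1] (mod (n div gcd x n)))"
    using key_cong[OF n0 x] gk_pow[OF x] by simp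
  also have "\<dots> = ord (n div gcd x n) k" using cd by (simp add: ord_def)
  finally show ?thesis .
qed


lemma card_cyc_gk: "x < n \<Longrightarrow> card (cycle_of gk x) = ord (n div gcd x n) k"
  using card_cycle_of[OF _ gk_bij, of x] per_gk by simp

lemma units_sub: "units_Zn n \<subseteq> {0..<n}" by (auto simp: units_Zn_def)

lemma card_cyc_unit: assumes "x \<in> units_Zn n" shows "card (cycle_of gk x) = ord n k"
proof -
  have x: "x < n" "coprime x n" using assms by (simp_all add: units_Zn_def)
  have "gcd x n = 1" using x(2) by (simp only: coprime_iff_gcd_eq_1)
  thus ?thesis using card_cyc_gk[OF x(1)] by simp
qed

lemma card_cyc_0: "card (cycle_of gk 0) = 1"
  using card_cyc_gk[of 0] n0 by simp

lemma ord_ge2: assumes "k \<noteq> 1" shows "ord n k \<ge> 2"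
proof -
  have "ord n k > 0" using cop by (simp add: coprime_commute)
  moreover have "ord n k \<noteq> 1"
  proof
    assume "ord n k = 1"
    hence "[k = 1] (mod n)" using ord_eq_Suc_0_iff by simp
    hence "k = 1" using cong_less_modulus_unique_nat kn n2 by simp
    thus False using assms by simp
  qed
  ultimately show ?thesis by linarith
qed

lemma units_closed: assumes "x \<in> units_Zn n" shows "cycle_of gk x \<subseteq> units_Zn n"
proof
  fix y assume "y \<in> cycle_of gk x"
  then obtain j where j: "y = (gk ^^ j) x" by (auto simp: cycle_of_iff)
  have x: "x < n" "coprime x n" using assms by (auto simp: units_Zn_def)
  have y: "y = x * k ^ j mod n" using j gk_pow[OF x(1)] by simp
  have "coprime (x * k ^ j) n" using x(2) cop by simp
  hence "coprime y n" using y n0 by simp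
  moreover have "y < n" using y n0 by simp
  ultimately show "y \<in> units_Zn n" by (simp add: units_Zn_def)
qed

lemma unit_index_eq: "unit_index n k = card {cycle_of gk x | x. x \<in> units_Zn n}"
proof -
  have "(\<lambda>h. (h * x) mod n) ` cyc_sub n k = cycle_of gk x" if x: "x \<in> units_Zn n" for x
  proof -
    have xn: "x < n" using x by (simp add: units_Zn_def)
    have e: "(k ^ j mod n) * x mod n = (gk ^^ j) x" for j
      by (simp add: gk_pow[OF xn] mod_mult_right_eq mult.commute)
    show ?thesis
    proof (intro equalityI subsetI)
      fix y assume "y \<in> (\<lambda>h. (h * x) mod n) ` cyc_sub n k"
      then obtain j where "y = (k ^ j mod n) * x mod n" by (auto simp: cyc_sub_def)
      thus "y \<in> cycle_of gk x" using e by (auto simp: cycle_of_iff)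
    next
      fix y assume "y \<in> cycle_of gk x"
      then obtain j where "y = (gk ^^ j) x" by (auto simp: cycle_of_iff)
      hence "y = (k ^ j mod n) * x mod n" using e by simp
      moreover have "k ^ j mod n \<in> cyc_sub n k" by (auto simp: cyc_sub_def)
      ultimately show "y \<in> (\<lambda>h. (h * x) mod n) ` cyc_sub n k" by blast
    qed
  qed
  hence "{(\<lambda>h. (h * x) mod n) ` cyc_sub n k | x. x \<in> units_Zn n} = {cycle_of gk x | x. x \<in> units_Zn n}"
    by (metis (no_types, lifting))
  thus ?thesis by (simp add: unit_index_def)
qed

lemma card_units: "card (units_Zn n) = ord n k * unit_index n k"
proof -
  have "ord n k * card {cycle_of gk x | x. x \<in> units_Zn n \<and> card (cycle_of gk x) = ord n k}
      = card {x \<in> units_Zn n. card (cycle_of gk x) = ord n k}"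
    by (rule count_cycles[OF _ gk_bij units_sub units_closed]) simp
  moreover have "{cycle_of gk x | x. x \<in> units_Zn n \<and> card (cycle_of gk x) = ord n k}
      = {cycle_of gk x | x. x \<in> units_Zn n}" using card_cyc_unit by blast
  moreover have "{x \<in> units_Zn n. card (cycle_of gk x) = ord n k} = units_Zn n"
    using card_cyc_unit by blast
  ultimately show ?thesis using unit_index_eq by simp
qed

lemma count_m:
  "card {x \<in> {0..<n}. card (cycle_of gk x) = m} =
     (if m = 1 then 1 else 0) + (if m = ord n k then card (units_Zn n) else 0)
     + card {z \<in> Tn n. ord (n div gcd z n) k = m}"
proof -
  let ?P = "\<lambda>x. card (cycle_of gk x) = m"
  have split: "{0..<n} = {0} \<union> units_Zn n \<union> Tn n" using n0 by (auto simp: units_Zn_def Tn_def)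
  have d1: "0 \<notin> units_Zn n" using n2 by (auto simp: units_Zn_def)
  have d2: "units_Zn n \<inter> Tn n = {}" by (auto simp: Tn_def)
  have d3: "0 \<notin> Tn n" by (auto simp: Tn_def)
  have fU: "finite (units_Zn n)" by (simp add: units_Zn_def)
  have fT: "finite (Tn n)" by (simp add: Tn_def)
  have "{x \<in> {0..<n}. ?P x} = {x \<in> {0}. ?P x} \<union> {x \<in> units_Zn n. ?P x} \<union> {x \<in> Tn n. ?P x}"
    unfolding split by blast
  hence "card {x \<in> {0..<n}. ?P x} = card {x \<in> {0}. ?P x} + card {x \<in> units_Zn n. ?P x} + card {x \<in> Tn n. ?P x}"
    using d1 d2 d3 fU fT by (simp add: card_Un_disjoint disjoint_iff)
  moreover have "card {x \<in> {0}. ?P x} = (if m = 1 then 1 else 0)"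
  proof -
    have "{x \<in> {0}. ?P x} = (if m = 1 then {0} else {})" using card_cyc_0 by auto
    thus ?thesis by simp
  qed
  moreover have "{x \<in> units_Zn n. ?P x} = (if m = ord n k then units_Zn n else {})"
    using card_cyc_unit by auto
  moreover have "{x \<in> Tn n. ?P x} = {z \<in> Tn n. ord (n div gcd z n) k = m}"
    using card_cyc_gk by (auto simp: Tn_def)
  ultimately show ?thesis by simp
qed

lemma Tm_empty:
  assumes "\<not> m dvd ord n k" shows "{z \<in> Tn n. ord (n div gcd z n) k = m} = {}"
proof -
  have "ord (n div gcd z n) k dvd ord n k" for z
  proof -
    have "[k ^ ord n k = 1] (mod n)" by (rule ord)
    moreover have "(n div gcd z n) dvd n" by (metis dvd_triv_left dvd_div_mult_self gcd_dvd2)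
    ultimately have "[k ^ ord n k = 1] (mod (n div gcd z n))" by (rule cong_dvd_modulus_nat)
    thus ?thesis using ord_divides by blast
  qed
  thus ?thesis using assms by auto
qed

lemma formula:
  assumes k1: "k \<noteq> 1"
  shows "real (num_cycles {0..<n} gk m) =
     (if m = ord n k then real (unit_index n k) + Lcount n k (ord n k)
      else if m = 1 then Lcount n k 1 + 1
      else if m dvd ord n k then Lcount n k m else 0)"
proof (cases "m = 0")
  case True
  have "num_cycles {0..<n} gk m = 0" using num_cycles_0[OF _ gk_bij] True by simp
  moreover have "ord n k \<noteq> 0" using ord_ge2[OF k1] by simp
  ultimately show ?thesis using True by (simp add: ord_eq_0)
next
  case False
  let ?c = "card {z \<in> Tn n. ord (n div gcd z n) k = m}"
  have "m * num_cycles {0..<n} gk m = card {x \<in> {0..<n}. card (cycle_of gk x) = m}"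
  proof -
    have "cycle_of gk a \<subseteq> {0..<n}" if "a \<in> {0..<n}" for a
      using cycle_of_subset[OF gk_bij that] .
    thus ?thesis unfolding num_cycles_def by (intro count_cycles[OF _ gk_bij]) auto
  qed
  also have "\<dots> = (if m = 1 then 1 else 0) + (if m = ord n k then ord n k * unit_index n k else 0) + ?c"
    using count_m card_units by simp
  finally have eq: "real m * real (num_cycles {0..<n} gk m) =
      (if m = 1 then 1 else 0) + (if m = ord n k then real (ord n k) * real (unit_index n k) else 0) + real ?c"
    by (simp flip: of_nat_mult of_nat_add)
  have L: "Lcount n k m = real ?c / real m" by (simp add: Lcount_def)
  have m0: "real m > 0" using False by simp
  have l2: "ord n k \<ge> 2" using ord_ge2[OF k1] .
  have Lm: "real m * Lcount n k m = real ?c" using L m0 by simp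
  let ?R = "(if m = ord n k then real (unit_index n k) + Lcount n k (ord n k)
      else if m = 1 then Lcount n k 1 + 1
      else if m dvd ord n k then Lcount n k m else 0)"
  have "real m * real (num_cycles {0..<n} gk m) = real m * ?R"
  proof (cases "m = ord n k")
    case True
    thus ?thesis using eq Lm l2 by (simp add: algebra_simps)
  next
    case ml: False
    show ?thesis
    proof (cases "m = 1")
      case True
      thus ?thesis using eq Lm ml by (simp add: algebra_simps)
    next
      case m1: False
      show ?thesis
      proof (cases "m dvd ord n k")
        case True
        thus ?thesis using eq Lm ml m1 by (simp add: algebra_simps)
      next
        case False
        hence "?c = 0" using Tm_empty[OF False] by (simp only: card.empty)
        thus ?thesis using eq ml m1 False by simp
      qed
    qed
  qed
  thus ?thesis using m0 by simp
qed
end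



lemma construct:
  fixes A :: "'a set" and f :: "'a \<Rightarrow> 'a" and \<phi> :: "nat \<Rightarrow> 'a"
  assumes n0: "n > 0" and phi: "bij_betw \<phi> {0..<n} A"
    and conj: "\<forall>j<n. f (\<phi> j) = \<phi> (j * k mod n)" and bijf: "bij_betw f A A"
  shows "\<exists>(mult :: 'a \<Rightarrow> 'a \<Rightarrow> 'a) (e :: 'a).
            let G = \<lparr>carrier = A, mult = mult, one = e\<rparr> in
            group G \<and> cyclic_group G \<and> f \<in> iso G G"
proof -
  define \<psi> where "\<psi> = inv_into {0..<n} \<phi>"
  have psiA: "\<psi> a < n" if "a \<in> A" for a
    using that phi unfolding \<psi>_def by (metis atLeastLessThan_iff bij_betw_def inv_into_into)
  have phipsi: "\<phi> (\<psi> a) = a" if "a \<in> A" for a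
    using that phi unfolding \<psi>_def by (meson bij_betw_inv_into_right)
  have psiphi: "\<psi> (\<phi> j) = j" if "j < n" for j
    using that phi unfolding \<psi>_def by (simp add: bij_betw_inv_into_left)
  have phiA: "\<phi> j \<in> A" if "j < n" for j
    using that phi by (auto simp: bij_betw_def)
  have allphi: "\<exists>j<n. a = \<phi> j" if "a \<in> A" for a
    using psiA[OF that] phipsi[OF that] by metis
  define M where "M a b = \<phi> ((\<psi> a + \<psi> b) mod n)" for a b
  define G where "G = \<lparr>carrier = A, mult = M, one = \<phi> 0\<rparr>"
  have Mphi: "M (\<phi> i) (\<phi> j) = \<phi> ((i + j) mod n)" if "i < n" "j < n" for i j
    using that by (simp add: M_def psiphi)
  have cG: "carrier G = A" and mG: "x \<otimes>\<^bsub>G\<^esub> y = M x y" and oG: "\<one>\<^bsub>G\<^esub> = \<phi> 0" for x y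
    by (simp_all add: G_def)
  have grp: "group G"
  proof (rule groupI)
    fix x y assume "x \<in> carrier G" "y \<in> carrier G"
    thus "x \<otimes>\<^bsub>G\<^esub> y \<in> carrier G" using n0 by (simp add: cG mG M_def phiA)
  next
    show "\<one>\<^bsub>G\<^esub> \<in> carrier G" using n0 by (simp add: cG oG phiA)
  next
    fix x y z assume "x \<in> carrier G" "y \<in> carrier G" "z \<in> carrier G"
    then obtain i j l where ijl: "i < n" "j < n" "l < n" "x = \<phi> i" "y = \<phi> j" "z = \<phi> l"
      using allphi by (metis cG)
    have "((i + j) mod n + l) mod n = (i + (j + l) mod n) mod n"
      by (simp add: mod_add_left_eq mod_add_right_eq add.assoc)
    thus "x \<otimes>\<^bsub>G\<^esub> y \<otimes>\<^bsub>G\<^esub> z = x \<otimes>\<^bsub>G\<^esub> (y \<otimes>\<^bsub>G\<^esub> z)"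
      using ijl n0 by (simp add: mG Mphi)
  next
    fix x assume "x \<in> carrier G"
    then obtain i where i: "i < n" "x = \<phi> i" using allphi by (metis cG)
    thus "\<one>\<^bsub>G\<^esub> \<otimes>\<^bsub>G\<^esub> x = x" using n0 by (simp add: mG oG Mphi)
  next
    fix x assume "x \<in> carrier G"
    then obtain i where i: "i < n" "x = \<phi> i" using allphi by (metis cG)
    have "((n - i) mod n + i) mod n = 0"
    proof -
      have "((n - i) mod n + i) mod n = ((n - i) + i) mod n" by (simp add: mod_add_left_eq)
      also have "\<dots> = 0" using i by simp
      finally show ?thesis .
    qed
    hence "\<phi> ((n - i) mod n) \<otimes>\<^bsub>G\<^esub> x = \<one>\<^bsub>G\<^esub>"
      using i n0 by (simp add: mG oG Mphi)
    moreover have "\<phi> ((n - i) mod n) \<in> carrier G" using n0 by (simp add: cG phiA)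
    ultimately show "\<exists>y\<in>carrier G. y \<otimes>\<^bsub>G\<^esub> x = \<one>\<^bsub>G\<^esub>" by blast
  qed
  define x where "x = \<phi> (1 mod n)"
  have xpow: "x [^]\<^bsub>G\<^esub> (j::nat) = \<phi> (j mod n)" for j
  proof (induction j)
    case 0 thus ?case by (simp add: oG)
  next
    case (Suc j)
    have "x [^]\<^bsub>G\<^esub> (Suc j) = M (\<phi> (j mod n)) (\<phi> (1 mod n))"
      using Suc by (simp add: mG x_def)
    also have "\<dots> = \<phi> ((j mod n + 1 mod n) mod n)" using n0 by (simp add: Mphi)
    also have "\<dots> = \<phi> ((j + 1) mod n)" by (simp only: mod_add_eq)
    also have "\<dots> = \<phi> (Suc j mod n)" by simp
    finally show ?case .
  qed
  have cyc: "cyclic_group G"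
  proof -
    have xc: "x \<in> carrier G" using n0 by (simp add: cG x_def phiA)
    have "carrier G = range (\<lambda>i::int. x [^]\<^bsub>G\<^esub> i)"
    proof (intro equalityI subsetI)
      fix a assume a: "a \<in> carrier G"
      then obtain j where j: "j < n" "a = \<phi> j" using allphi by (metis cG)
      have "a = x [^]\<^bsub>G\<^esub> (int j)" using j xpow[of j] by (simp add: int_pow_int)
      thus "a \<in> range (\<lambda>i::int. x [^]\<^bsub>G\<^esub> i)" by blast
    next
      fix a assume "a \<in> range (\<lambda>i::int. x [^]\<^bsub>G\<^esub> i)"
      thus "a \<in> carrier G" using group.int_pow_closed[OF grp xc] by auto
    qed
    thus ?thesis using group.cyclic_group[OF grp] xc by blast
  qed
  have iso: "f \<in> iso G G"
  proof -
    have "f \<in> hom G G"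
    proof (rule homI)
      fix a assume "a \<in> carrier G" thus "f a \<in> carrier G" using bijf by (auto simp: cG bij_betw_def)
    next
      fix a b assume "a \<in> carrier G" "b \<in> carrier G"
      then obtain i j where ij: "i < n" "j < n" "a = \<phi> i" "b = \<phi> j" using allphi by (metis cG)
      have "f (a \<otimes>\<^bsub>G\<^esub> b) = \<phi> ((i + j) mod n * k mod n)"
        using ij n0 conj by (simp add: mG Mphi)
      also have "\<dots> = \<phi> ((i + j) * k mod n)" by (simp only: mod_mult_left_eq)
      also have "\<dots> = \<phi> ((i * k + j * k) mod n)" by (simp only: add_mult_distrib)
      also have "\<dots> = \<phi> ((i * k mod n + j * k mod n) mod n)" by (simp only: mod_add_eq)
      also have "\<dots> = f a \<otimes>\<^bsub>G\<^esub> f b"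
        using ij n0 conj by (simp add: mG Mphi)
      finally show "f (a \<otimes>\<^bsub>G\<^esub> b) = f a \<otimes>\<^bsub>G\<^esub> f b" .
    qed
    thus ?thesis using bijf by (simp add: iso_def cG)
  qed
  show ?thesis using grp cyc iso unfolding G_def Let_def by blast
qed



lemma decompose:
  fixes A :: "'a set" and f :: "'a \<Rightarrow> 'a" and G :: "('a, 'b) monoid_scheme" (structure)
  assumes fin: "finite A" and ne: "A \<noteq> {}" and cA: "card A = n" and bijf: "bij_betw f A A"
    and grp: "group G" and cyc: "cyclic_group G" and iso: "f \<in> iso G G" and cG: "carrier G = A"
  shows "\<exists>\<phi> k. bij_betw \<phi> {0..<n} A \<and> k < n \<and> coprime k n \<and> (\<forall>j<n. f (\<phi> j) = \<phi> (j * k mod n))"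
proof -
  interpret group G by (rule grp)
  obtain x where xc: "x \<in> carrier G" and xr: "carrier G = range (\<lambda>i::int. x [^] i)"
    using cyc cyclic_group by blast
  have "card A > 0" using fin ne by (simp add: card_gt_0_iff)
  hence n0: "n > 0" using cA by simp
  have on: "x [^] n = \<one>" using pow_order_eq_1[OF xc] cG cA by (simp add: order_def)
  have pmod: "x [^] (m::nat) = x [^] (m mod n)" for m
  proof -
    have "x [^] m = x [^] (m mod n + n * (m div n))" by simp
    also have "\<dots> = x [^] (m mod n) \<otimes> (x [^] n) [^] (m div n)"
      using xc by (simp only: nat_pow_mult[symmetric] nat_pow_pow)
    also have "\<dots> = x [^] (m mod n)" using xc by (simp add: on)
    finally show ?thesis .
  qed
  have ipow: "x [^] (i::int) = x [^] (nat (i mod int n))" for i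
  proof -
    have "x [^] i = x [^] (i mod int n + int n * (i div int n))" by simp
    also have "\<dots> = x [^] (i mod int n) \<otimes> (x [^] (int n)) [^] (i div int n)"
      using xc by (simp only: int_pow_mult int_pow_pow)
    also have "\<dots> = x [^] (i mod int n)" using xc by (simp add: on int_pow_int)
    also have "\<dots> = x [^] (int (nat (i mod int n)))" using n0 by simp
    also have "\<dots> = x [^] (nat (i mod int n))" by (rule int_pow_int)
    finally show ?thesis .
  qed
  define \<phi> where "\<phi> j = x [^] (j::nat)" for j
  have img: "\<phi> ` {0..<n} = A"
  proof (intro equalityI subsetI)
    fix a assume "a \<in> \<phi> ` {0..<n}"
    thus "a \<in> A" using xc cG by (auto simp: \<phi>_def)
  next
    fix a assume "a \<in> A"
    then obtain i :: int where "a = x [^] i" using xr cG by auto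
    hence "a = \<phi> (nat (i mod int n))" using ipow by (simp add: \<phi>_def)
    moreover have "nat (i mod int n) < n" using n0 by (simp add: nat_less_iff)
    ultimately show "a \<in> \<phi> ` {0..<n}" by auto
  qed
  have bphi: "bij_betw \<phi> {0..<n} A"
  proof -
    have "card (\<phi> ` {0..<n}) = card {0..<n}" using img cA by simp
    hence "inj_on \<phi> {0..<n}" by (rule eq_card_imp_inj_on[rotated]) simp
    thus ?thesis using img by (simp add: bij_betw_def)
  qed
  have hom: "f \<in> hom G G" using iso by (simp add: iso_def)
  have "f x \<in> A" using bijf xc cG by (auto simp: bij_betw_def)
  then obtain k where k: "k < n" "f x = \<phi> k" using img by (metis atLeastLessThan_iff imageE)
  have conj: "f (\<phi> j) = \<phi> (j * k mod n)" for j
  proof -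
    have "f (\<phi> j) = (f x) [^] j" unfolding \<phi>_def using hom_nat_pow[OF hom xc grp grp] .
    also have "\<dots> = x [^] (k * j)" using k xc by (simp add: \<phi>_def nat_pow_pow)
    also have "\<dots> = \<phi> (j * k mod n)" using pmod by (simp add: \<phi>_def mult.commute)
    finally show ?thesis .
  qed
  have cop: "coprime k n"
  proof (cases "n = 1")
    case True thus ?thesis using k by simp
  next
    case False
    hence n2: "n \<ge> 2" using n0 by simp
    define g where "g j = j * k mod n" for j
    have sub: "g ` {0..<n} \<subseteq> {0..<n}" using n0 by (auto simp: g_def)
    have inj: "inj_on g {0..<n}"
    proof (rule inj_onI)
      fix i j assume ij: "i \<in> {0..<n}" "j \<in> {0..<n}" "g i = g j"
      hence "f (\<phi> i) = f (\<phi> j)" using conj by (simp add: g_def)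
      moreover have "\<phi> i \<in> A" "\<phi> j \<in> A" using ij img by auto
      ultimately have "\<phi> i = \<phi> j" using bijf by (auto simp: bij_betw_def inj_on_def)
      thus "i = j" using bphi ij by (auto simp: bij_betw_def inj_on_def)
    qed
    have "g ` {0..<n} = {0..<n}" using endo_inj_surj[OF _ sub inj] by simp
    moreover have "1 \<in> {0..<n}" using n2 by simp
    ultimately obtain j where j: "j * k mod n = 1" by (metis g_def imageE)
    show ?thesis
    proof (rule coprimeI)
      fix c assume c: "c dvd k" "c dvd n"
      hence "c dvd j * k mod n" by (simp add: dvd_mod)
      thus "is_unit c" using j by simp
    qed
  qed
  show ?thesis using bphi k(1) cop conj by blast
qed


theorem theorem2p1:
  fixes A :: "'a set" and f :: "'a \<Rightarrow> 'a" and n :: nat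
  assumes "finite A" and "A \<noteq> {}" and "card A = n" and "bij_betw f A A"
  shows "(\<exists>(mult :: 'a \<Rightarrow> 'a \<Rightarrow> 'a) (e :: 'a).
            let G = \<lparr>carrier = A, mult = mult, one = e\<rparr> in
            group G \<and> cyclic_group G \<and> f \<in> iso G G)
    \<longleftrightarrow>
    ((\<forall>a\<in>A. f a = a) \<or>
     (\<exists>k \<in> units_Zn n. k \<noteq> 1 mod n \<and>
        (let l = ord n k in
         \<forall>m. real (num_cycles A f m) =
              (if m = l then real (unit_index n k) + Lcount n k l
               else if m = 1 then Lcount n k 1 + 1
               else if m dvd l then Lcount n k m
               else 0))))"
proof -
  note fin = assms(1) and ne = assms(2) and cA = assms(3) and bijf = assms(4)
  have "card A > 0" using fin ne by (simp add: card_gt_0_iff)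
  hence n0: "n > 0" using cA by simp
  show ?thesis
  proof
    assume "\<exists>(mult :: 'a \<Rightarrow> 'a \<Rightarrow> 'a) (e :: 'a).
            let G = \<lparr>carrier = A, mult = mult, one = e\<rparr> in
            group G \<and> cyclic_group G \<and> f \<in> iso G G"
    then obtain M :: "'a \<Rightarrow> 'a \<Rightarrow> 'a" and e :: 'a where
      H: "group \<lparr>carrier = A, mult = M, one = e\<rparr>" "cyclic_group \<lparr>carrier = A, mult = M, one = e\<rparr>"
         "f \<in> iso \<lparr>carrier = A, mult = M, one = e\<rparr> \<lparr>carrier = A, mult = M, one = e\<rparr>"
      unfolding Let_def by blast
    obtain \<phi> k where phi: "bij_betw \<phi> {0..<n} A" and k: "k < n" "coprime k n"
      and conj: "\<forall>j<n. f (\<phi> j) = \<phi> (j * k mod n)"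
      using decompose[OF fin ne cA bijf H] by auto
    show "(\<forall>a\<in>A. f a = a) \<or>
     (\<exists>k \<in> units_Zn n. k \<noteq> 1 mod n \<and>
        (let l = ord n k in
         \<forall>m. real (num_cycles A f m) =
              (if m = l then real (unit_index n k) + Lcount n k l
               else if m = 1 then Lcount n k 1 + 1
               else if m dvd l then Lcount n k m
               else 0)))"
    proof (cases "k = 1 mod n")
      case True
      have "f a = a" if a: "a \<in> A" for a
      proof -
        obtain j where j: "j < n" "a = \<phi> j" using a phi by (auto simp: bij_betw_def)
        have km: "k mod n = 1 mod n" using True by simp
        have "j * k mod n = j * (k mod n) mod n" by (simp add: mod_mult_right_eq)
        also have "\<dots> = j * (1 mod n) mod n" using km by simp
        also have "\<dots> = j * 1 mod n" by (rule mod_mult_right_eq)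
        also have "\<dots> = j" using j(1) by simp
        finally show ?thesis using conj j by simp
      qed
      thus ?thesis by blast
    next
      case False
      have n2: "n \<ge> 2" using False n0 k by (cases "n = 1") auto
      have k1: "k \<noteq> 1" using False n2 by auto
      have conj': "\<forall>x\<in>{0..<n}. f (\<phi> x) = \<phi> (gk n k x)" using conj by (simp add: gk_apply[OF n2 k])
      have "num_cycles A f m = num_cycles {0..<n} (gk n k) m" for m
        by (rule num_cycles_conj[OF _ gk_bij[OF n2 k] phi conj']) simp
      hence "\<forall>m. real (num_cycles A f m) =
              (if m = ord n k then real (unit_index n k) + Lcount n k (ord n k)
               else if m = 1 then Lcount n k 1 + 1
               else if m dvd ord n k then Lcount n k m
               else 0)"
        using formula[OF n2 k k1] by simp
      moreover have "k \<in> units_Zn n" using k by (simp add: units_Zn_def)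
      ultimately show ?thesis using False unfolding Let_def by blast
    qed
  next
    assume "(\<forall>a\<in>A. f a = a) \<or>
     (\<exists>k \<in> units_Zn n. k \<noteq> 1 mod n \<and>
        (let l = ord n k in
         \<forall>m. real (num_cycles A f m) =
              (if m = l then real (unit_index n k) + Lcount n k l
               else if m = 1 then Lcount n k 1 + 1
               else if m dvd l then Lcount n k m
               else 0)))"
    thus "\<exists>(mult :: 'a \<Rightarrow> 'a \<Rightarrow> 'a) (e :: 'a).
            let G = \<lparr>carrier = A, mult = mult, one = e\<rparr> in
            group G \<and> cyclic_group G \<and> f \<in> iso G G"
    proof
      assume id: "\<forall>a\<in>A. f a = a"
      obtain \<phi> where phi: "bij_betw \<phi> {0..<card A} A" using ex_bij_betw_nat_finite[OF fin] by blast
      have phiA: "\<phi> j \<in> A" if "j < n" for j using phi that cA by (auto simp: bij_betw_def)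
      have conj: "\<forall>j<n. f (\<phi> j) = \<phi> (j * 1 mod n)" using id phiA by simp
      show ?thesis using construct[OF n0 _ conj bijf] phi cA by simp
    next
      assume "\<exists>k \<in> units_Zn n. k \<noteq> 1 mod n \<and>
        (let l = ord n k in
         \<forall>m. real (num_cycles A f m) =
              (if m = l then real (unit_index n k) + Lcount n k l
               else if m = 1 then Lcount n k 1 + 1
               else if m dvd l then Lcount n k m
               else 0))"
      then obtain k where ku: "k \<in> units_Zn n" and k1': "k \<noteq> 1 mod n"
        and F: "\<forall>m. real (num_cycles A f m) =
              (if m = ord n k then real (unit_index n k) + Lcount n k (ord n k)
               else if m = 1 then Lcount n k 1 + 1
               else if m dvd ord n k then Lcount n k m
               else 0)"
        unfolding Let_def by blast
      have k: "k < n" "coprime k n" using ku by (auto simp: units_Zn_def)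
      have n2: "n \<ge> 2" using k1' n0 k by (cases "n = 1") auto
      have k1: "k \<noteq> 1" using k1' n2 by auto
      have "real (num_cycles A f m) = real (num_cycles {0..<n} (gk n k) m)" for m
        using F formula[OF n2 k k1, of m] by simp
      hence cnt: "\<forall>m. num_cycles A f m = num_cycles {0..<n} (gk n k) m" by simp
      obtain \<phi> where phi: "bij_betw \<phi> {0..<n} A" and conj: "\<forall>x\<in>{0..<n}. f (\<phi> x) = \<phi> (gk n k x)"
        using conj_exists[OF fin _ bijf gk_bij[OF n2 k] cnt] by auto
      have conj': "\<forall>j<n. f (\<phi> j) = \<phi> (j * k mod n)" using conj by (simp add: gk_apply[OF n2 k])
      show ?thesis using construct[OF n0 phi conj' bijf] .
    qed
  qed
qed

end
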